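(* Let $G$ be a locally compact group, $O$ a neighborhood of the unit, $K\subseteq G$ compact, and $F\subseteq G$ a finite set with $K\subseteq FO$ and $|F|=(K:O)$. Then for every $S\subseteq F$, $(SO:O)=|S|$.
   Context: For $X\subseteq G$ and a neighborhood $O$ of the unit, $(X:O)$ denotes the minimal $n$ such that there is a set $F'\subseteq G$ with $|F'|=n$ and $X\subseteq F'O$, where $F'O=\{fo: f\in F', o\in O\}$. *)

theory Defs
  imports "HOL-Analysis.Analysis" "HOL-Algebra.Algebra"
begin

definition topological_group :: "('a, 'b) monoid_scheme \<Rightarrow> 'a topology \<Rightarrow> bool" where
  "topological_group G T \<longleftrightarrow> group G \<and> topspace T = carrier G \<and>
     continuous_map (prod_topology T T) T (\<lambda>(x, y). x \<otimes>\<^bsub>G\<^esub> y) \<and>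
     continuous_map T T (\<lambda>x. inv\<^bsub>G\<^esub> x)"

definition locally_compact_group :: "('a, 'b) monoid_scheme \<Rightarrow> 'a topology \<Rightarrow> bool" where
  "locally_compact_group G T \<longleftrightarrow> topological_group G T \<and> locally_compact_space T"

definition unit_nbhd :: "('a, 'b) monoid_scheme \<Rightarrow> 'a topology \<Rightarrow> 'a set \<Rightarrow> bool" where
  "unit_nbhd G T V \<longleftrightarrow> V \<subseteq> carrier G \<and> (\<exists>U. openin T U \<and> \<one>\<^bsub>G\<^esub> \<in> U \<and> U \<subseteq> V)"

definition cov_num :: "('a, 'b) monoid_scheme \<Rightarrow> 'a set \<Rightarrow> 'a set \<Rightarrow> nat" where
  "cov_num G Y V = Least (\<lambda>n::nat. \<exists>F'. F' \<subseteq> carrier G \<and> finite F' \<and> card F' = n \<and>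
                                  Y \<subseteq> set_mult G F' V)"

end

theory Submission
  imports Defs
begin

lemma sm_union: "set_mult G (A \<union> B) V = set_mult G A V \<union> set_mult G B V"
  unfolding set_mult_def by blast

lemma sm_mono: "A \<subseteq> B \<Longrightarrow> set_mult G A V \<subseteq> set_mult G B V"
  unfolding set_mult_def by blast

lemma cov_le:
  assumes "F' \<subseteq> carrier G" "finite F'" "Y \<subseteq> set_mult G F' V"
  shows "cov_num G Y V \<le> card F'"
  unfolding cov_num_def by (rule Least_le) (use assms in blast)

lemma cov_ex:
  assumes "F' \<subseteq> carrier G" "finite F'" "Y \<subseteq> set_mult G F' V"
  shows "\<exists>F''. F'' \<subseteq> carrier G \<and> finite F'' \<and> card F'' = cov_num G Y V \<and> Y \<subseteq> set_mult G F'' V"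
  unfolding cov_num_def by (rule LeastI) (use assms in blast)

theorem proposition6:
  fixes G :: "('a, 'b) monoid_scheme" and T :: "'a topology"
    and V K F :: "'a set"
  assumes "locally_compact_group G T"
    and "unit_nbhd G T V"
    and "compactin T K"
    and "F \<subseteq> carrier G" and "finite F"
    and "K \<subseteq> set_mult G F V"
    and "card F = cov_num G K V"
  shows "\<forall>S. S \<subseteq> F \<longrightarrow> cov_num G (set_mult G S V) V = card S"
proof (intro allI impI)
  fix S assume S: "S \<subseteq> F"
  have Sc: "S \<subseteq> carrier G" "finite S" using S assms(4,5) finite_subset by blast+
  have le: "cov_num G (set_mult G S V) V \<le> card S" by (rule cov_le[OF Sc]) simp
  obtain F' where F': "F' \<subseteq> carrier G" "finite F'" "card F' = cov_num G (set_mult G S V) V"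
    "set_mult G S V \<subseteq> set_mult G F' V" using cov_ex[OF Sc, of "set_mult G S V" V] by auto
  have "F = (F - S) \<union> S" using S by blast
  hence "set_mult G F V = set_mult G (F - S) V \<union> set_mult G S V" by (metis sm_union)
  also have "\<dots> \<subseteq> set_mult G (F - S) V \<union> set_mult G F' V" using F'(4) by (rule Un_mono[OF order_refl])
  also have "\<dots> = set_mult G ((F - S) \<union> F') V" by (rule sm_union[symmetric])
  finally have KF: "K \<subseteq> set_mult G ((F - S) \<union> F') V" using assms(6) by blast
  hence "card F \<le> card ((F - S) \<union> F')"
  proof -
    have "(F - S) \<union> F' \<subseteq> carrier G" using assms(4) F'(1) by blast
    moreover have "finite ((F - S) \<union> F')" using assms(5) F'(2) by blast
    ultimately have "cov_num G K V \<le> card ((F - S) \<union> F')" using cov_le KF by blast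
    thus ?thesis using assms(7) by simp
  qed
  also have "\<dots> \<le> card (F - S) + card F'" by (rule card_Un_le)
  also have "card (F - S) = card F - card S" using S Sc by (simp add: card_Diff_subset)
  finally have "card S \<le> card F'" using card_mono[OF assms(5) S] by linarith
  with le F'(3) show "cov_num G (set_mult G S V) V = card S" by linarith
qed

end
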